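(* The map $\psi$ is a homogeneous $(n-1)$-cocycle on $GL_n(\mathbb{C})$: for all $A,A_0,\dots,A_n\in GL_n(\mathbb{C})$, every $n$-tuple $\mathfrak{A}=(A_1,\dots,A_n)$ of elements of $GL_n(\mathbb{C})$, every homogeneous polynomial $P$ and every row vector $x\in\mathbb{C}^n$, $$\psi(A\mathfrak{A})(P,x)=\det(A)\,\psi(\mathfrak{A})(A^TP,xA)\qquad\text{and}\qquad \sum_{i=0}^n(-1)^i\psi(A_0,\dots,\widehat{A_i},\dots,A_n)(P,x)=0 .$$ Consequently $\psi$ defines a class in $H^{n-1}(GL_n(\mathbb{C}),S_0)$, where $S_0$ is the space of functions $H\times\mathbb{C}^n\to\mathbb{C}$ ($H$ the homogeneous polynomials of a fixed degree) with $GL_n(\mathbb{C})$-action $(A\phi)(P,x)=\det(A)\phi(A^TP,xA)$.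
   Context: Notation: $\langle x,v\rangle=\sum_ix_iv_i$ for a row vector $x$ and column vector $v$. For $\sigma\in M_n(\mathbb{C})$ with columns $\sigma_1,\dots,\sigma_n$: $f(\sigma)(x)=\det(\sigma)/\prod_j\langle x,\sigma_j\rangle$ if all $\langle x,\sigma_j\rangle\neq0$ and $0$ otherwise; $f(\sigma)(P,x)=P(-\partial_{x_1},\dots,-\partial_{x_n})f(\sigma)(x)$ (computed where all $\langle x,\sigma_j\rangle\ne0$, and $0$ elsewhere). $(A^TP)(y)=P(yA^T)$. For an $n$-tuple $\mathfrak{A}=(A_1,\dots,A_n)$ of matrices in $GL_n(\mathbb{C})$, write $A_{kj}$ for the $j$-th column of $A_k$; for $x\ne0$ let $j_k$ be the smallest index with $\langle x,A_{kj_k}\rangle\neq0$, and set $\psi(\mathfrak{A})(P,x)=f(A_{1j_1},\dots,A_{nj_n})(P,x)$; set $\psi(\mathfrak{A})(P,0)=0$. For $A\in GL_n(\mathbb{C})$, $A\mathfrak{A}=(AA_1,\dots,AA_n)$. *)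

theory Defs
  imports Complex_Main "HOL-Analysis.Derivative" "Jordan_Normal_Form.Determinant"
begin

type_synonym coeffs = "(nat \<Rightarrow> nat) \<Rightarrow> complex"

text \<open>Polynomials in the variables y_0,...,y_(n-1), given by finitely supported
  coefficient functions on exponent vectors alpha (alpha i = 0 for i >= n).\<close>
definition polys :: "nat \<Rightarrow> coeffs set" where
  "polys n = {c. finite {\<alpha>. c \<alpha> \<noteq> 0} \<and> (\<forall>\<alpha>. c \<alpha> \<noteq> 0 \<longrightarrow> (\<forall>i\<ge>n. \<alpha> i = 0))}"

definition homog_polys :: "nat \<Rightarrow> coeffs set" where
  "homog_polys n = {c \<in> polys n. \<exists>d. \<forall>\<alpha>. c \<alpha> \<noteq> 0 \<longrightarrow> (\<Sum>i<n. \<alpha> i) = d}"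

definition poly_eval :: "nat \<Rightarrow> coeffs \<Rightarrow> complex vec \<Rightarrow> complex" where
  "poly_eval n c y = (\<Sum>\<alpha>\<in>{\<alpha>. c \<alpha> \<noteq> 0}. c \<alpha> * (\<Prod>i<n. (y $ i) ^ \<alpha> i))"

text \<open>(A^T P)(y) = P(y A^T); for a row vector y, y A^T is the vector A *v y.\<close>
definition poly_transp :: "nat \<Rightarrow> complex mat \<Rightarrow> coeffs \<Rightarrow> coeffs" where
  "poly_transp n A c = (THE c'. c' \<in> polys n \<and>
     (\<forall>y\<in>carrier_vec n. poly_eval n c' y = poly_eval n c (A *\<^sub>v y)))"

definition pdiff :: "nat \<Rightarrow> (complex vec \<Rightarrow> complex) \<Rightarrow> complex vec \<Rightarrow> complex" where
  "pdiff i g x = deriv (\<lambda>t. g (vec (dim_vec x) (\<lambda>j. if j = i then t else x $ j))) (x $ i)"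

definition multi_pdiff :: "nat \<Rightarrow> (nat \<Rightarrow> nat) \<Rightarrow> (complex vec \<Rightarrow> complex) \<Rightarrow> complex vec \<Rightarrow> complex" where
  "multi_pdiff n \<alpha> g = foldr (\<lambda>i h. (pdiff i ^^ \<alpha> i) h) [0..<n] g"

definition diff_op :: "nat \<Rightarrow> coeffs \<Rightarrow> (complex vec \<Rightarrow> complex) \<Rightarrow> complex vec \<Rightarrow> complex" where
  "diff_op n c g x = (\<Sum>\<alpha>\<in>{\<alpha>. c \<alpha> \<noteq> 0}. c \<alpha> * (-1) ^ (\<Sum>i<n. \<alpha> i) * multi_pdiff n \<alpha> g x)"

definition f_fun :: "nat \<Rightarrow> complex mat \<Rightarrow> complex vec \<Rightarrow> complex" where
  "f_fun n \<sigma> x = (if (\<forall>j<n. x \<bullet> col \<sigma> j \<noteq> 0) then det \<sigma> / (\<Prod>j<n. x \<bullet> col \<sigma> j) else 0)"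

definition f_op :: "nat \<Rightarrow> complex mat \<Rightarrow> coeffs \<Rightarrow> complex vec \<Rightarrow> complex" where
  "f_op n \<sigma> P x = (if (\<forall>j<n. x \<bullet> col \<sigma> j \<noteq> 0) then diff_op n P (f_fun n \<sigma>) x else 0)"

definition GL :: "nat \<Rightarrow> complex mat set" where
  "GL n = {A. A \<in> carrier_mat n n \<and> det A \<noteq> 0}"

definition sel_index :: "nat \<Rightarrow> complex mat \<Rightarrow> complex vec \<Rightarrow> nat" where
  "sel_index n A x = (LEAST j. j < n \<and> x \<bullet> col A j \<noteq> 0)"

text \<open>psi for an n-tuple (As 0, ..., As (n-1)) (= (A_1,...,A_n) in the paper).\<close>
definition psi :: "nat \<Rightarrow> (nat \<Rightarrow> complex mat) \<Rightarrow> coeffs \<Rightarrow> complex vec \<Rightarrow> complex" where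
  "psi n As P x = (if x = 0\<^sub>v n then 0 else
     f_op n (mat n n (\<lambda>(i, k). col (As k) (sel_index n (As k) x) $ i)) P x)"

end

theory Submission
  imports Defs
begin


datatype expr = Cst complex | Lin "complex vec" | Inv "complex vec"
  | Add expr expr | Mul expr expr | Smul complex expr

primrec ev :: "expr \<Rightarrow> complex vec \<Rightarrow> complex" where
  "ev (Cst c) y = c"
| "ev (Lin v) y = y \<bullet> v"
| "ev (Inv v) y = inverse (y \<bullet> v)"
| "ev (Add a b) y = ev a y + ev b y"
| "ev (Mul a b) y = ev a y * ev b y"
| "ev (Smul c a) y = c * ev a y"

primrec der :: "complex vec \<Rightarrow> expr \<Rightarrow> expr" where
  "der u (Cst c) = Cst 0"
| "der u (Lin v) = Cst (u \<bullet> v)"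
| "der u (Inv v) = Smul (-(u \<bullet> v)) (Mul (Inv v) (Inv v))"
| "der u (Add a b) = Add (der u a) (der u b)"
| "der u (Mul a b) = Add (Mul (der u a) b) (Mul a (der u b))"
| "der u (Smul c a) = Smul c (der u a)"

primrec ders :: "complex vec list \<Rightarrow> expr \<Rightarrow> expr" where
  "ders [] e = e"
| "ders (u # us) e = ders us (der u e)"

primrec invs :: "expr \<Rightarrow> complex vec set" where
  "invs (Cst c) = {}"
| "invs (Lin v) = {}"
| "invs (Inv v) = {v}"
| "invs (Add a b) = invs a \<union> invs b"
| "invs (Mul a b) = invs a \<union> invs b"
| "invs (Smul c a) = invs a"

primrec wf :: "nat \<Rightarrow> expr \<Rightarrow> bool" where
  "wf n (Cst c) = True"
| "wf n (Lin v) = (v \<in> carrier_vec n)"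
| "wf n (Inv v) = (v \<in> carrier_vec n)"
| "wf n (Add a b) = (wf n a \<and> wf n b)"
| "wf n (Mul a b) = (wf n a \<and> wf n b)"
| "wf n (Smul c a) = wf n a"

definition UU :: "nat \<Rightarrow> expr \<Rightarrow> complex vec set" where
  "UU n e = {y \<in> carrier_vec n. \<forall>v\<in>invs e. y \<bullet> v \<noteq> 0}"

lemma invs_der: "invs (der u e) \<subseteq> invs e"
  by (induction e) auto

lemma wf_der: "wf n e \<Longrightarrow> wf n (der u e)"
  by (induction e) auto

lemma ders_append: "ders (us @ ws) e = ders ws (ders us e)"
  by (induction us arbitrary: e) auto

lemma invs_ders: "invs (ders us e) \<subseteq> invs e"
  using invs_der by (induction us arbitrary: e) (auto, blast)

lemma wf_ders: "wf n e \<Longrightarrow> wf n (ders us e)"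
  using wf_der by (induction us arbitrary: e) auto

lemma UU_der: "UU n e \<subseteq> UU n (der u e)"
  using invs_der unfolding UU_def by blast

lemma UU_ders: "UU n e \<subseteq> UU n (ders us e)"
  using invs_ders unfolding UU_def by blast

lemma line_sprod:
  assumes "y \<in> carrier_vec n" "u \<in> carrier_vec n" "v \<in> carrier_vec n"
  shows "(y + t \<cdot>\<^sub>v u) \<bullet> v = y \<bullet> v + t * (u \<bullet> v)"
  using assms by (simp add: add_scalar_prod_distrib[of _ n])

lemma DER:
  assumes "wf n e" "y \<in> UU n e" "u \<in> carrier_vec n"
  shows "((\<lambda>t. ev e (y + t \<cdot>\<^sub>v u)) has_field_derivative ev (der u e) y) (at 0)"
  using assms
proof (induction e)
  case (Cst c)
  then show ?case by simp
next
  case (Lin v)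
  have y: "y \<in> carrier_vec n" using Lin unfolding UU_def by auto
  have "((\<lambda>t. y \<bullet> v + t * (u \<bullet> v)) has_field_derivative (u \<bullet> v)) (at 0)"
    by (auto intro!: derivative_eq_intros)
  then show ?case using Lin y by (simp add: line_sprod[of _ n])
next
  case (Inv v)
  have y: "y \<in> carrier_vec n" and nz: "y \<bullet> v \<noteq> 0" using Inv unfolding UU_def by auto
  have "((\<lambda>t. inverse (y \<bullet> v + t * (u \<bullet> v))) has_field_derivative
      (-(u \<bullet> v) * (inverse (y \<bullet> v) * inverse (y \<bullet> v)))) (at 0)"
    using nz by (auto intro!: derivative_eq_intros simp: field_simps power2_eq_square)
  then show ?case using Inv y by (simp add: line_sprod[of _ n])
next
  case (Add a b)
  then show ?case unfolding UU_def by (auto intro!: derivative_eq_intros)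
next
  case (Mul a b)
  then have "y \<in> UU n a" "y \<in> UU n b" unfolding UU_def by auto
  moreover have "y + 0 \<cdot>\<^sub>v u = y" using Mul.prems unfolding UU_def by auto
  ultimately show ?case using Mul by (auto intro!: derivative_eq_intros)
next
  case (Smul c a)
  then have "y \<in> UU n a" unfolding UU_def by auto
  with Smul show ?case by (auto intro!: derivative_eq_intros)
qed

lemma UU_eventually:
  assumes "wf n e" "y \<in> UU n e" "u \<in> carrier_vec n"
  shows "eventually (\<lambda>t. y + t \<cdot>\<^sub>v u \<in> UU n e) (nhds 0)"
proof -
  have fin: "finite (invs e)" by (induction e) auto
  have y: "y \<in> carrier_vec n" using assms unfolding UU_def by auto
  have wfv: "\<forall>v\<in>invs e. v \<in> carrier_vec n" using assms(1) by (induction e) auto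
  have "\<forall>v\<in>invs e. eventually (\<lambda>t. (y + t \<cdot>\<^sub>v u) \<bullet> v \<noteq> 0) (nhds 0)"
  proof
    fix v assume v: "v \<in> invs e"
    have "((\<lambda>t. y \<bullet> v + t * (u \<bullet> v)) \<longlongrightarrow> y \<bullet> v + 0 * (u \<bullet> v)) (nhds 0)"
      by (intro tendsto_intros) (rule filterlim_ident)
    then have "eventually (\<lambda>t. y \<bullet> v + t * (u \<bullet> v) \<noteq> 0) (nhds 0)"
      using assms(2) v unfolding UU_def by (intro tendsto_imp_eventually_ne) auto
    then show "eventually (\<lambda>t. (y + t \<cdot>\<^sub>v u) \<bullet> v \<noteq> 0) (nhds 0)"
      using v wfv y assms(3) by (simp add: line_sprod[of _ n])
  qed
  then have "eventually (\<lambda>t. \<forall>v\<in>invs e. (y + t \<cdot>\<^sub>v u) \<bullet> v \<noteq> 0) (nhds 0)"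
    using fin by (simp add: eventually_ball_finite_distrib)
  then show ?thesis unfolding UU_def using y assms(3)
    by (auto elim!: eventually_mono)
qed




lemma vec_line:
  assumes "(y::complex vec) \<in> carrier_vec n" "i < n"
  shows "vec (dim_vec y) (\<lambda>j. if j = i then t else y $ j) = y + (t - y $ i) \<cdot>\<^sub>v unit_vec n i"
  using assms by (intro eq_vecI) (auto simp: unit_vec_def algebra_simps)

lemma ev_shift:
  assumes "eventually P (nhds (0::complex))"
  shows "eventually (\<lambda>t. P (t - c)) (nhds c)"
proof -
  have "filterlim (\<lambda>t. t - c) (nhds 0) (nhds c)"
  proof -
    have "((\<lambda>t. t - c) \<longlongrightarrow> c - c) (nhds c)"
      by (intro tendsto_intros filterlim_ident)
    then show ?thesis by simp
  qed
  then show ?thesis using eventually_compose_filterlim[OF assms] by blast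
qed

lemma PD_LOC:
  assumes "\<forall>z\<in>UU n e. G z = H z" "wf n e" "y \<in> UU n e" "i < n"
  shows "pdiff i G y = pdiff i H y"
proof -
  have y: "y \<in> carrier_vec n" using assms unfolding UU_def by auto
  have "eventually (\<lambda>s. y + s \<cdot>\<^sub>v unit_vec n i \<in> UU n e) (nhds 0)"
    using UU_eventually[OF assms(2,3)] by auto
  from ev_shift[OF this, of "y $ i"]
  have "eventually (\<lambda>t. G (vec (dim_vec y) (\<lambda>j. if j = i then t else y $ j))
      = H (vec (dim_vec y) (\<lambda>j. if j = i then t else y $ j))) (nhds (y $ i))"
    by (auto elim!: eventually_mono simp: vec_line[OF y assms(4)] assms(1))
  then show ?thesis unfolding pdiff_def by (rule deriv_cong_ev) simp
qed

lemma PD_EV: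
  assumes "wf n e" "y \<in> UU n e" "i < n"
  shows "pdiff i (ev e) y = ev (der (unit_vec n i) e) y"
proof -
  have y: "y \<in> carrier_vec n" using assms unfolding UU_def by auto
  have d: "((\<lambda>s. ev e (y + s \<cdot>\<^sub>v unit_vec n i)) has_field_derivative ev (der (unit_vec n i) e) y) (at (y $ i - y $ i))"
    using DER[OF assms(1,2)] by simp
  have "((\<lambda>t. ev e (y + (t - y $ i) \<cdot>\<^sub>v unit_vec n i)) has_field_derivative ev (der (unit_vec n i) e) y * 1) (at (y $ i))"
    by (rule DERIV_chain2[where g="\<lambda>t. t - y $ i", OF d]) (auto intro!: derivative_eq_intros)
  then show ?thesis unfolding pdiff_def vec_line[OF y assms(3)]
    by (intro DERIV_imp_deriv) simp
qed

definition pds :: "nat list \<Rightarrow> (complex vec \<Rightarrow> complex) \<Rightarrow> complex vec \<Rightarrow> complex" where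
  "pds is G = foldr pdiff is G"

lemma PDS:
  assumes "wf n e" "\<forall>i\<in>set is. i < n"
  shows "\<forall>y\<in>UU n e. pds is (ev e) y = ev (ders (map (unit_vec n) (rev is)) e) y"
  using assms(2)
proof (induction "is")
  case Nil
  then show ?case by (simp add: pds_def)
next
  case (Cons i "is")
  show ?case
  proof
    fix y assume y: "y \<in> UU n e"
    let ?E = "ders (map (unit_vec n) (rev is)) e"
    have IH: "\<forall>z\<in>UU n e. pds is (ev e) z = ev ?E z" using Cons by auto
    have "pds (i # is) (ev e) y = pdiff i (pds is (ev e)) y" by (simp add: pds_def)
    also have "\<dots> = pdiff i (ev ?E) y" using PD_LOC[OF IH assms(1) y] Cons by auto
    also have "\<dots> = ev (der (unit_vec n i) ?E) y"
      using PD_EV[OF wf_ders[OF assms(1)] UU_ders[THEN subsetD, OF y]] Cons by auto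
    finally show "pds (i # is) (ev e) y = ev (ders (map (unit_vec n) (rev (i # is))) e) y"
      by (simp add: ders_append)
  qed
qed

definition mlist :: "nat \<Rightarrow> (nat \<Rightarrow> nat) \<Rightarrow> nat list" where
  "mlist n \<alpha> = concat (map (\<lambda>i. replicate (\<alpha> i) i) [0..<n])"

lemma pds_append: "pds (a @ b) G = pds a (pds b G)"
  by (simp add: pds_def)


lemma multi_pdiff_pds: "multi_pdiff n \<alpha> g = pds (mlist n \<alpha>) g"
proof -
  have "foldr (\<lambda>i h. (pdiff i ^^ \<alpha> i) h) xs g = pds (concat (map (\<lambda>i. replicate (\<alpha> i) i) xs)) g" for xs
    by (induction xs) (auto simp: pds_def)
  then show ?thesis unfolding multi_pdiff_def mlist_def by simp
qed

lemma set_mlist: "set (mlist n \<alpha>) \<subseteq> {..<n}"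
  unfolding mlist_def by auto

lemma length_mlist: "length (mlist n \<alpha>) = (\<Sum>i<n. \<alpha> i)"
  unfolding mlist_def by (simp add: length_concat sum_list_sum_nth atLeast0LessThan comp_def)

lemma MPD:
  assumes "wf n e" "y \<in> UU n e"
  shows "multi_pdiff n \<alpha> (ev e) y = ev (ders (map (unit_vec n) (rev (mlist n \<alpha>))) e) y"
  using PDS[OF assms(1), of "mlist n \<alpha>"] set_mlist assms(2) unfolding multi_pdiff_pds by auto

lemma SEM:
  assumes "wf n X" "wf n Y" "wf n E" "UU n E \<subseteq> UU n X" "UU n E \<subseteq> UU n Y"
    "\<forall>z\<in>UU n E. ev X z = ev Y z" "set us \<subseteq> carrier_vec n"
  shows "\<forall>z\<in>UU n E. ev (ders us X) z = ev (ders us Y) z"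
  using assms
proof (induction us arbitrary: X Y)
  case Nil
  then show ?case by simp
next
  case (Cons u us)
  have u: "u \<in> carrier_vec n" using Cons.prems by auto
  have "\<forall>z\<in>UU n E. ev (der u X) z = ev (der u Y) z"
  proof
    fix z assume z: "z \<in> UU n E"
    have dX: "((\<lambda>t. ev X (z + t \<cdot>\<^sub>v u)) has_field_derivative ev (der u X) z) (at 0)"
      using DER[OF Cons.prems(1) _ u] z Cons.prems(4) by auto
    have dY: "((\<lambda>t. ev Y (z + t \<cdot>\<^sub>v u)) has_field_derivative ev (der u Y) z) (at 0)"
      using DER[OF Cons.prems(2) _ u] z Cons.prems(5) by auto
    have ev: "eventually (\<lambda>t. ev X (z + t \<cdot>\<^sub>v u) = ev Y (z + t \<cdot>\<^sub>v u)) (nhds 0)"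
      using UU_eventually[OF Cons.prems(3) z u] Cons.prems(6) by (auto elim!: eventually_mono)
    have "((\<lambda>t. ev X (z + t \<cdot>\<^sub>v u)) has_field_derivative ev (der u Y) z) (at 0)"
      using dY DERIV_cong_ev[OF refl ev refl] by simp
    then show "ev (der u X) z = ev (der u Y) z" using dX DERIV_unique by blast
  qed
  moreover have "UU n E \<subseteq> UU n (der u X)" "UU n E \<subseteq> UU n (der u Y)"
    using Cons.prems UU_der by blast+
  ultimately show ?case using Cons.IH[of "der u X" "der u Y"] Cons.prems wf_der by simp
qed




lemma COMM: "ev (der u (der w e)) y = ev (der w (der u e)) y"
proof (induction e)
  case (Mul a b)
  then show ?case by (simp add: distrib_left distrib_right mult.commute mult.left_commute)
qed (simp_all add: mult.commute mult.left_commute)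

lemma DLIN:
  assumes "wf n e" "u \<in> carrier_vec n"
  shows "ev (der u e) y = (\<Sum>k<n. u $ k * ev (der (unit_vec n k) e) y)"
  using assms(1)
proof (induction e)
  case (Lin v)
  then show ?case using assms(2) by (auto simp: scalar_prod_def[of u v] atLeast0LessThan intro!: sum.cong)
next
  case (Inv v)
  have "u \<bullet> v = (\<Sum>k<n. u $ k * v $ k)" using Inv assms(2) by (simp add: scalar_prod_def atLeast0LessThan)
  then show ?case using Inv
    by (simp add: sum_distrib_right sum_negf mult.assoc)
next
  case (Add a b)
  then show ?case by (simp add: sum.distrib distrib_left)
next
  case (Mul a b)
  then show ?case by (simp add: sum.distrib distrib_left sum_distrib_left sum_distrib_right mult.assoc mult.left_commute)
next
  case (Smul c a)
  then show ?case by (simp add: sum_distrib_left mult.left_commute)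
qed simp




primrec sumE :: "expr list \<Rightarrow> expr" where
  "sumE [] = Cst 0"
| "sumE (e # es) = Add e (sumE es)"

lemma ev_sumE: "ev (sumE es) y = sum_list (map (\<lambda>e. ev e y) es)"
  by (induction es) auto

lemma der_sumE: "der u (sumE es) = sumE (map (der u) es)"
  by (induction es) auto

lemma ders_Nil_fun: "ders [] = (\<lambda>e. e)" by (rule ext) simp
lemma ders_Cons_fun: "ders (u # us) = ders us \<circ> der u" by (rule ext) simp

lemma ders_sumE: "ders us (sumE es) = sumE (map (ders us) es)"
  by (induction us arbitrary: es) (auto simp: der_sumE ders_Nil_fun ders_Cons_fun)

lemma ders_Smul: "ders us (Smul c X) = Smul c (ders us X)"
  by (induction us arbitrary: X) auto

lemma invs_sumE: "invs (sumE es) = (\<Union>e\<in>set es. invs e)"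
  by (induction es) auto

lemma wf_sumE: "wf n (sumE es) = (\<forall>e\<in>set es. wf n e)"
  by (induction es) auto

lemma ONESTEP:
  assumes "wf n Z" "u \<in> carrier_vec n" "set us \<subseteq> carrier_vec n" "y \<in> UU n Z"
  shows "ev (ders us (der u Z)) y = (\<Sum>k<n. u $ k * ev (ders us (der (unit_vec n k) Z)) y)"
proof -
  define Y where "Y = sumE (map (\<lambda>k. Smul (u $ k) (der (unit_vec n k) Z)) [0..<n])"
  have wY: "wf n Y" unfolding Y_def wf_sumE using wf_der[OF assms(1)] by auto
  have UY: "UU n Z \<subseteq> UU n Y" unfolding Y_def UU_def invs_sumE using invs_der by fastforce
  have eq: "\<forall>z\<in>UU n Z. ev (der u Z) z = ev Y z"
    unfolding Y_def ev_sumE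
    by (simp add: DLIN[OF assms(1,2)] comp_def lessThan_atLeast0 interv_sum_list_conv_sum_set_nat)
  have "ev (ders us (der u Z)) y = ev (ders us Y) y"
    using SEM[OF wf_der[OF assms(1)] wY assms(1) UU_der UY eq assms(3)] assms(4) by blast
  also have "\<dots> = (\<Sum>k<n. u $ k * ev (ders us (der (unit_vec n k) Z)) y)"
    unfolding Y_def ders_sumE ev_sumE
    by (simp add: comp_def ders_Smul lessThan_atLeast0 interv_sum_list_conv_sum_set_nat)
  finally show ?thesis .
qed

definition TT :: "nat \<Rightarrow> nat \<Rightarrow> nat list set" where
  "TT n m = {is. set is \<subseteq> {..<n} \<and> length is = m}"

lemma finite_TT: "finite (TT n m)"
  unfolding TT_def by (rule finite_lists_length_eq) simp

lemma TT_Suc: "TT n (Suc m) = (\<lambda>(xs, k). k # xs) ` (TT n m \<times> {..<n})"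
  unfolding TT_def by (rule lists_length_Suc_eq)

lemma sum_TT_Suc:
  "(\<Sum>is\<in>TT n (Suc m). f is) = (\<Sum>is\<in>TT n m. \<Sum>k<n. f (k # is))"
proof -
  have inj: "inj_on (\<lambda>(xs, k). k # xs) (TT n m \<times> {..<n})" by (auto simp: inj_on_def)
  show ?thesis unfolding TT_Suc sum.reindex[OF inj] sum.cartesian_product
    by (rule sum.cong) auto
qed

lemma EXP:
  assumes "set us \<subseteq> carrier_vec n" "wf n e" "y \<in> UU n e"
  shows "ev (ders us e) y = (\<Sum>is\<in>TT n (length us).
     (\<Prod>j<length us. us ! j $ (is ! j)) * ev (ders (map (unit_vec n) is) e) y)"
  using assms
proof (induction us arbitrary: e)
  case Nil
  have "TT n 0 = {[]}" unfolding TT_def by auto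
  then show ?case by simp
next
  case (Cons u us)
  have u: "u \<in> carrier_vec n" using Cons.prems by auto
  have yU: "y \<in> UU n (der u e)" using UU_der Cons.prems by blast
  have "ev (ders (u # us) e) y = ev (ders us (der u e)) y" by simp
  also have "\<dots> = (\<Sum>is\<in>TT n (length us). (\<Prod>j<length us. us ! j $ (is ! j)) *
      ev (ders (map (unit_vec n) is) (der u e)) y)"
    using Cons.IH[of "der u e"] Cons.prems wf_der yU by auto
  also have "\<dots> = (\<Sum>is\<in>TT n (length us). (\<Prod>j<length us. us ! j $ (is ! j)) *
      (\<Sum>k<n. u $ k * ev (ders (map (unit_vec n) (k # is)) e) y))"
  proof (rule sum.cong[OF refl])
    fix "is" assume "is" : "is \<in> TT n (length us)"
    have st: "set (map (unit_vec n) is) \<subseteq> carrier_vec n" by auto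
    show "(\<Prod>j<length us. us ! j $ (is ! j)) * ev (ders (map (unit_vec n) is) (der u e)) y =
      (\<Prod>j<length us. us ! j $ (is ! j)) * (\<Sum>k<n. u $ k * ev (ders (map (unit_vec n) (k # is)) e) y)"
      using ONESTEP[OF Cons.prems(2) u st Cons.prems(3)] by simp
  qed
  also have "\<dots> = (\<Sum>is\<in>TT n (Suc (length us)).
     (\<Prod>j<Suc (length us). (u # us) ! j $ (is ! j)) * ev (ders (map (unit_vec n) is) e) y)"
    unfolding sum_TT_Suc
    by (simp del: prod.lessThan_Suc add: prod.lessThan_Suc_shift sum_distrib_left mult_ac)
  finally show ?case by simp
qed

lemma SWAP:
  assumes "wf n e" "y \<in> UU n e" "set (us1 @ a # b # us2) \<subseteq> carrier_vec n"
  shows "ev (ders (us1 @ a # b # us2) e) y = ev (ders (us1 @ b # a # us2) e) y"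
proof -
  define Z where "Z = ders us1 e"
  have wZ: "wf n Z" unfolding Z_def using wf_ders assms by auto
  have UZ: "UU n e \<subseteq> UU n Z" unfolding Z_def by (rule UU_ders)
  have "\<forall>z\<in>UU n e. ev (ders us2 (der b (der a Z))) z = ev (ders us2 (der a (der b Z))) z"
  proof (rule SEM)
    show "UU n e \<subseteq> UU n (der b (der a Z))" using UZ UU_der by blast
    show "UU n e \<subseteq> UU n (der a (der b Z))" using UZ UU_der by blast
  qed (use assms wZ wf_der COMM in auto)
  then show ?thesis using assms(2) unfolding ders_append Z_def by simp
qed

lemma MOVE:
  assumes "wf n e" "y \<in> UU n e" "set (us1 @ a # us2) \<subseteq> carrier_vec n"
  shows "ev (ders (us1 @ a # us2) e) y = ev (ders (a # us1 @ us2) e) y"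
  using assms(3)
proof (induction us1 arbitrary: us2 rule: rev_induct)
  case Nil
  then show ?case by simp
next
  case (snoc x xs)
  have "ev (ders ((xs @ [x]) @ a # us2) e) y = ev (ders (xs @ x # a # us2) e) y" by simp
  also have "\<dots> = ev (ders (xs @ a # x # us2) e) y"
    using SWAP[OF assms(1,2)] snoc.prems by auto
  also have "\<dots> = ev (ders (a # xs @ x # us2) e) y"
    using snoc.IH[of "x # us2"] snoc.prems by auto
  finally show ?case by simp
qed

lemma PERM:
  assumes "mset us = mset vs" "wf n e" "y \<in> UU n e" "set us \<subseteq> carrier_vec n"
  shows "ev (ders us e) y = ev (ders vs e) y"
  using assms
proof (induction us arbitrary: e vs)
  case Nil
  then show ?case by simp
next
  case (Cons a us)
  have "a \<in> set vs" using Cons.prems(1) by (metis list.set_intros(1) set_mset_mset)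
  then obtain vs1 vs2 where vs: "vs = vs1 @ a # vs2" by (meson split_list)
  have setvs: "set vs \<subseteq> carrier_vec n" using Cons.prems(1,4)
    by (metis set_mset_mset)
  have "ev (ders vs e) y = ev (ders (a # vs1 @ vs2) e) y"
    using MOVE[OF Cons.prems(2,3)] setvs vs by auto
  also have "\<dots> = ev (ders (vs1 @ vs2) (der a e)) y" by simp
  also have "\<dots> = ev (ders us (der a e)) y"
  proof -
    have "y \<in> UU n (der a e)" using UU_der Cons.prems(3) by blast
    then show ?thesis using Cons.IH[of "vs1 @ vs2" "der a e"] Cons.prems vs wf_der by auto
  qed
  finally show ?case by simp
qed




primrec prodE :: "expr list \<Rightarrow> expr" where
  "prodE [] = Cst 1"
| "prodE (e # es) = Mul e (prodE es)"

lemma ev_prodE: "ev (prodE es) y = prod_list (map (\<lambda>e. ev e y) es)"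
  by (induction es) auto

lemma invs_prodE: "invs (prodE es) = (\<Union>e\<in>set es. invs e)"
  by (induction es) auto

lemma wf_prodE: "wf n (prodE es) = (\<forall>e\<in>set es. wf n e)"
  by (induction es) auto

definition fE :: "nat \<Rightarrow> complex mat \<Rightarrow> expr" where
  "fE n \<sigma> = Smul (det \<sigma>) (prodE (map (\<lambda>j. Inv (col \<sigma> j)) [0..<n]))"

lemma prod_upt_list: "prod_list (map g [0..<n]) = (\<Prod>j<n. g j)"
  using prod.distinct_set_conv_list[of "[0..<n]" g] by (simp add: lessThan_atLeast0)

lemma ev_fE: "ev (fE n \<sigma>) y = det \<sigma> * (\<Prod>j<n. inverse (y \<bullet> col \<sigma> j))"
  unfolding fE_def by (simp add: ev_prodE comp_def prod_upt_list)

lemma f_fun_ev: "f_fun n \<sigma> = ev (fE n \<sigma>)"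
proof (rule ext)
  fix y
  show "f_fun n \<sigma> y = ev (fE n \<sigma>) y"
  proof (cases "\<forall>j<n. y \<bullet> col \<sigma> j \<noteq> 0")
    case True
    then show ?thesis unfolding f_fun_def ev_fE
      using prod_inversef[of "\<lambda>j. y \<bullet> col \<sigma> j" "{..<n}"]
      by (simp add: divide_inverse comp_def)
  next
    case False
    then obtain j where "j < n" "y \<bullet> col \<sigma> j = 0" by auto
    then have "(\<Prod>j<n. inverse (y \<bullet> col \<sigma> j)) = 0"
      by (auto intro!: prod_zero)
    then show ?thesis unfolding f_fun_def ev_fE using False by auto
  qed
qed

lemma invs_fE: "invs (fE n \<sigma>) = (\<lambda>j. col \<sigma> j) ` {..<n}"
  unfolding fE_def by (auto simp: invs_prodE)

lemma wf_fE: "\<sigma> \<in> carrier_mat n n \<Longrightarrow> wf n (fE n \<sigma>)"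
  unfolding fE_def by (auto simp: wf_prodE)

lemma UU_fE: "UU n (fE n \<sigma>) = {y \<in> carrier_vec n. \<forall>j<n. y \<bullet> col \<sigma> j \<noteq> 0}"
  unfolding UU_def invs_fE by auto

lemma DOP:
  assumes "\<sigma> \<in> carrier_mat n n" "y \<in> carrier_vec n" "\<forall>j<n. y \<bullet> col \<sigma> j \<noteq> 0"
  shows "diff_op n P (f_fun n \<sigma>) y = (\<Sum>\<alpha>\<in>{\<alpha>. P \<alpha> \<noteq> 0}. P \<alpha> * (-1) ^ (\<Sum>i<n. \<alpha> i) *
     ev (ders (map (unit_vec n) (rev (mlist n \<alpha>))) (fE n \<sigma>)) y)"
proof -
  have "y \<in> UU n (fE n \<sigma>)" using assms UU_fE by auto
  then show ?thesis unfolding diff_op_def f_fun_ev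
    using MPD[OF wf_fE[OF assms(1)]] by simp
qed

lemma ev_ders_Cst0: "ev (ders us (Cst 0)) y = 0"
  by (induction us) auto

definition cidx :: "nat \<Rightarrow> nat \<Rightarrow> nat" where
  "cidx i j = (if j < i then j else Suc j)"

definition SIG :: "nat \<Rightarrow> (nat \<Rightarrow> complex vec) \<Rightarrow> nat \<Rightarrow> complex mat" where
  "SIG n c i = mat n n (\<lambda>(r, k). c (cidx i k) $ r)"

lemma SIG_carrier: "SIG n c i \<in> carrier_mat n n"
  unfolding SIG_def by auto

lemma col_SIG:
  assumes "\<forall>k\<le>n. c k \<in> carrier_vec n" "i \<le> n" "j < n"
  shows "col (SIG n c i) j = c (cidx i j)"
proof -
  have "cidx i j \<le> n" using assms unfolding cidx_def by auto
  then show ?thesis unfolding SIG_def using assms by (auto intro!: eq_vecI)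
qed

lemma bij_cidx:
  assumes "i \<le> n"
  shows "bij_betw (cidx i) {..<n} ({..<Suc n} - {i})"
proof (rule bij_betw_imageI)
  show "inj_on (cidx i) {..<n}" unfolding inj_on_def cidx_def by auto
  show "cidx i ` {..<n} = {..<Suc n} - {i}"
  proof
    show "cidx i ` {..<n} \<subseteq> {..<Suc n} - {i}" unfolding cidx_def by auto
    show "{..<Suc n} - {i} \<subseteq> cidx i ` {..<n}"
    proof
      fix k assume k: "k \<in> {..<Suc n} - {i}"
      show "k \<in> cidx i ` {..<n}"
      proof (cases "k < i")
        case True
        then show ?thesis using assms by (intro rev_image_eqI[of k]) (auto simp: cidx_def)
      next
        case False
        then show ?thesis using k by (intro rev_image_eqI[of "k - 1"]) (auto simp: cidx_def)
      qed
    qed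
  qed
qed

lemma prod_cidx:
  assumes "i \<le> n"
  shows "(\<Prod>j<n. f (cidx i j)) * f i = (\<Prod>k<Suc n. (f k :: complex))"
proof -
  have "(\<Prod>k<Suc n. f k) = f i * (\<Prod>k\<in>{..<Suc n} - {i}. f k)"
    using assms by (intro prod.remove) auto
  also have "(\<Prod>k\<in>{..<Suc n} - {i}. f k) = (\<Prod>j<n. f (cidx i j))"
    using prod.reindex_bij_betw[OF bij_cidx[OF assms], of f] by simp
  finally show ?thesis by simp
qed

lemma det_M_zero:
  fixes y :: "complex vec" and c :: "nat \<Rightarrow> complex vec"
  assumes y: "y \<in> carrier_vec n" and c: "\<forall>k\<le>n. c k \<in> carrier_vec n"
  shows "det (mat (Suc n) (Suc n) (\<lambda>(r, k). if r = 0 then y \<bullet> c k else c k $ (r - 1))) = 0"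
    (is "det ?M = 0")
proof -
  define w where "w = vec (Suc n) (\<lambda>r. if r = 0 then 1 else - y $ (r - 1))"
  have Mc: "?M \<in> carrier_mat (Suc n) (Suc n)" by auto
  have "transpose_mat ?M *\<^sub>v w = 0\<^sub>v (Suc n)"
  proof (rule eq_vecI)
    fix k assume "k < dim_vec (0\<^sub>v (Suc n) :: complex vec)"
    then have k: "k < Suc n" by simp
    have ck: "c k \<in> carrier_vec n" using c k by auto
    have "(transpose_mat ?M *\<^sub>v w) $ k = (\<Sum>r<Suc n. ?M $$ (r, k) * w $ r)"
      using k by (simp add: scalar_prod_def w_def lessThan_atLeast0 mult.commute)
    also have "\<dots> = y \<bullet> c k + (\<Sum>r<n. c k $ r * (- y $ r))"
      using k by (simp del: sum.lessThan_Suc add: sum.lessThan_Suc_shift w_def)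
    also have "\<dots> = 0"
      using ck y by (simp add: scalar_prod_def lessThan_atLeast0 sum_negf mult.commute)
    finally show "(transpose_mat ?M *\<^sub>v w) $ k = 0\<^sub>v (Suc n) $ k" using k by simp
  qed simp
  moreover have "w \<noteq> 0\<^sub>v (Suc n)"
  proof
    assume "w = 0\<^sub>v (Suc n)"
    then have "w $ 0 = 0" by simp
    then show False unfolding w_def by simp
  qed
  moreover have "w \<in> carrier_vec (Suc n)" unfolding w_def by simp
  ultimately have "det (transpose_mat ?M) = 0"
    using det_0_iff_vec_prod_zero[of "transpose_mat ?M" "Suc n"] Mc by auto
  then show ?thesis using det_transpose[OF Mc] by simp
qed

lemma COCYC_f:
  fixes y :: "complex vec" and c :: "nat \<Rightarrow> complex vec"
  assumes y: "y \<in> carrier_vec n" and c: "\<forall>k\<le>n. c k \<in> carrier_vec n"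
    and nz: "\<forall>k\<le>n. y \<bullet> c k \<noteq> 0"
  shows "(\<Sum>i\<le>n. (-1) ^ i * ev (fE n (SIG n c i)) y) = 0"
proof -
  define M where "M = mat (Suc n) (Suc n) (\<lambda>(r, k). if r = 0 then y \<bullet> c k else c k $ (r - 1))"
  define Q where "Q = (\<Prod>k<Suc n. y \<bullet> c k)"
  have Q: "Q \<noteq> 0" unfolding Q_def using nz by (auto simp: less_Suc_eq_le)
  have Mc: "M \<in> carrier_mat (Suc n) (Suc n)" unfolding M_def by auto
  have del: "mat_delete M 0 i = SIG n c i" if "i < Suc n" for i
    unfolding mat_delete_def M_def SIG_def cidx_def using that
    by (intro eq_matI) auto
  have "det M = (\<Sum>k<Suc n. M $$ (0, k) * cofactor M 0 k)"
    by (rule laplace_expansion_row[OF Mc]) simp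
  also have "\<dots> = (\<Sum>k<Suc n. (-1) ^ k * det (SIG n c k) * (y \<bullet> c k))"
  proof (intro sum.cong refl)
    fix k assume "k \<in> {..<Suc n}"
    then have k: "k < Suc n" by simp
    have "M $$ (0, k) = y \<bullet> c k" unfolding M_def using k by simp
    then show "M $$ (0, k) * cofactor M 0 k = (-1) ^ k * det (SIG n c k) * (y \<bullet> c k)"
      unfolding cofactor_def using del[OF k] by (simp add: mult_ac)
  qed
  finally have dM: "(\<Sum>k<Suc n. (-1) ^ k * det (SIG n c k) * (y \<bullet> c k)) = 0"
    using det_M_zero[OF y c] unfolding M_def by simp
  have tm: "(-1) ^ i * ev (fE n (SIG n c i)) y = (-1) ^ i * det (SIG n c i) * (y \<bullet> c i) / Q"
    if i: "i \<le> n" for i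
  proof -
    have "(\<Prod>j<n. inverse (y \<bullet> col (SIG n c i) j)) = inverse (\<Prod>j<n. y \<bullet> c (cidx i j))"
      using col_SIG[OF c i] prod_inversef[of "\<lambda>j. y \<bullet> c (cidx i j)" "{..<n}"]
      by (simp add: comp_def)
    also have "(\<Prod>j<n. y \<bullet> c (cidx i j)) = Q / (y \<bullet> c i)"
      using prod_cidx[OF i, of "\<lambda>k. y \<bullet> c k"] nz i unfolding Q_def
      by (simp add: field_simps)
    finally show ?thesis unfolding ev_fE using Q nz i by (simp add: field_simps)
  qed
  have "(\<Sum>i\<le>n. (-1) ^ i * ev (fE n (SIG n c i)) y)
      = (\<Sum>i<Suc n. (-1) ^ i * det (SIG n c i) * (y \<bullet> c i) / Q)"
    using tm by (simp add: lessThan_Suc_atMost)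
  also have "\<dots> = 0" using dM by (simp add: sum_divide_distrib[symmetric])
  finally show ?thesis .
qed




lemma exists_nz_col:
  fixes x :: "complex vec"
  assumes x: "x \<in> carrier_vec n" "x \<noteq> 0\<^sub>v n" and B: "B \<in> GL n"
  shows "\<exists>j<n. x \<bullet> col B j \<noteq> 0"
proof (rule ccontr)
  assume "\<not> ?thesis"
  then have z: "\<forall>j<n. x \<bullet> col B j = 0" by auto
  have Bc: "B \<in> carrier_mat n n" and dB: "det B \<noteq> 0" using B unfolding GL_def by auto
  have "transpose_mat B *\<^sub>v x = 0\<^sub>v n"
  proof (rule eq_vecI)
    fix j assume "j < dim_vec (0\<^sub>v n :: complex vec)"
    then have j: "j < n" by simp
    have "(transpose_mat B *\<^sub>v x) $ j = col B j \<bullet> x" using j Bc by simp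
    also have "\<dots> = x \<bullet> col B j" using Bc x by (intro comm_scalar_prod[of _ n]) auto
    finally show "(transpose_mat B *\<^sub>v x) $ j = 0\<^sub>v n $ j" using z j by simp
  qed (use Bc in simp)
  then have "det (transpose_mat B) = 0"
    using det_0_iff_vec_prod_zero[of "transpose_mat B" n] x Bc by auto
  then show False using det_transpose[OF Bc] dB by simp
qed

lemma sel_ok:
  fixes x :: "complex vec"
  assumes "x \<in> carrier_vec n" "x \<noteq> 0\<^sub>v n" "B \<in> GL n"
  shows "sel_index n B x < n \<and> x \<bullet> col B (sel_index n B x) \<noteq> 0"
  using LeastI_ex[OF exists_nz_col[OF assms]] unfolding sel_index_def by simp

lemma col_GL: "B \<in> GL n \<Longrightarrow> col B j \<in> carrier_vec n"
  unfolding GL_def using col_dim[of B j] by (auto simp: carrier_matD)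

lemma col_mat_vecs:
  assumes "\<forall>k<n. v k \<in> carrier_vec n" "j < n"
  shows "col (mat n n (\<lambda>(i, k). v k $ i)) j = v j"
  using assms by (auto intro!: eq_vecI)

lemma psi_eq:
  fixes x :: "complex vec"
  assumes x: "x \<in> carrier_vec n" "x \<noteq> 0\<^sub>v n" and As: "\<forall>k<n. As k \<in> GL n"
  defines "v \<equiv> \<lambda>k. col (As k) (sel_index n (As k) x)"
  shows "psi n As P x = diff_op n P (f_fun n (mat n n (\<lambda>(i, k). v k $ i))) x"
    and "\<forall>j<n. x \<bullet> col (mat n n (\<lambda>(i, k). v k $ i)) j \<noteq> 0"
    and "\<forall>k<n. v k \<in> carrier_vec n"
proof -
  show vc: "\<forall>k<n. v k \<in> carrier_vec n"
    using As col_GL unfolding v_def by auto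
  show nz: "\<forall>j<n. x \<bullet> col (mat n n (\<lambda>(i, k). v k $ i)) j \<noteq> 0"
    using col_mat_vecs[OF vc] sel_ok[OF x] As unfolding v_def by auto
  show "psi n As P x = diff_op n P (f_fun n (mat n n (\<lambda>(i, k). v k $ i))) x"
    unfolding psi_def f_op_def using nz x unfolding v_def by simp
qed

lemma ZERO:
  fixes x :: "complex vec" and c :: "nat \<Rightarrow> complex vec"
  assumes x: "x \<in> carrier_vec n" and c: "\<forall>k\<le>n. c k \<in> carrier_vec n"
    and nz: "\<forall>k\<le>n. x \<bullet> c k \<noteq> 0" and us: "set us \<subseteq> carrier_vec n"
  shows "(\<Sum>i\<le>n. (-1) ^ i * ev (ders us (fE n (SIG n c i))) x) = 0"
proof -
  define Z where "Z = sumE (map (\<lambda>i. Smul ((-1) ^ i) (fE n (SIG n c i))) [0..<Suc n])"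
  define E where "E = prodE (map (\<lambda>k. Inv (c k)) [0..<Suc n])"
  have UE: "UU n E = {z \<in> carrier_vec n. \<forall>k\<le>n. z \<bullet> c k \<noteq> 0}"
    unfolding UU_def E_def invs_prodE by (auto simp: less_Suc_eq_le)
  have wE: "wf n E" unfolding E_def wf_prodE using c by (auto simp: less_Suc_eq_le)
  have wZ: "wf n Z" unfolding Z_def wf_sumE using wf_fE[OF SIG_carrier] by auto
  have invZ: "invs Z \<subseteq> c ` {..n}"
  proof -
    have "col (SIG n c i) j \<in> c ` {..n}" if "i \<le> n" "j < n" for i j
      using col_SIG[OF c that] that by (auto simp: cidx_def)
    then show ?thesis unfolding Z_def invs_sumE by (auto simp: less_Suc_eq_le invs_fE)
  qed
  have UZ: "UU n E \<subseteq> UU n Z" unfolding UE using invZ unfolding UU_def by auto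
  have U0: "UU n E \<subseteq> UU n (Cst 0)" unfolding UE UU_def by auto
  have evZ: "\<forall>z\<in>UU n E. ev Z z = ev (Cst 0) z"
  proof
    fix z assume "z \<in> UU n E"
    then have z: "z \<in> carrier_vec n" "\<forall>k\<le>n. z \<bullet> c k \<noteq> 0" unfolding UE by auto
    have "ev Z z = (\<Sum>i\<le>n. (-1) ^ i * ev (fE n (SIG n c i)) z)"
      unfolding Z_def ev_sumE
      by (simp add: comp_def interv_sum_list_conv_sum_set_nat atLeast0LessThan lessThan_Suc_atMost del: upt_Suc)
    also have "\<dots> = 0" using COCYC_f[OF z(1) c z(2)] .
    finally show "ev Z z = ev (Cst 0) z" by simp
  qed
  have xE: "x \<in> UU n E" unfolding UE using x nz by auto
  have "ev (ders us Z) x = ev (ders us (Cst 0)) x"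
    using SEM[OF wZ _ wE UZ U0 evZ us] xE by simp
  then have "ev (ders us Z) x = 0" by (simp add: ev_ders_Cst0)
  moreover have "ev (ders us Z) x = (\<Sum>i\<le>n. (-1) ^ i * ev (ders us (fE n (SIG n c i))) x)"
    unfolding Z_def ders_sumE ev_sumE
    by (simp add: comp_def ders_Smul interv_sum_list_conv_sum_set_nat atLeast0LessThan lessThan_Suc_atMost del: upt_Suc)
  ultimately show ?thesis by simp
qed

theorem part2:
  fixes n :: nat and B :: "nat \<Rightarrow> complex mat" and P :: coeffs and x :: "complex vec"
  assumes B: "\<forall>k\<le>n. B k \<in> GL n" and x: "x \<in> carrier_vec n"
  shows "(\<Sum>i\<le>n. (-1) ^ i * psi n (\<lambda>k. if k < i then B k else B (Suc k)) P x) = 0"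
proof (cases "x = 0\<^sub>v n")
  case True
  then show ?thesis unfolding psi_def by simp
next
  case False
  define c where "c = (\<lambda>k. col (B k) (sel_index n (B k) x))"
  have c: "\<forall>k\<le>n. c k \<in> carrier_vec n" using B col_GL unfolding c_def by auto
  have nz: "\<forall>k\<le>n. x \<bullet> c k \<noteq> 0" using sel_ok[OF x False] B unfolding c_def by auto
  have psi_i: "psi n (\<lambda>k. if k < i then B k else B (Suc k)) P x
     = (\<Sum>\<alpha>\<in>{\<alpha>. P \<alpha> \<noteq> 0}. P \<alpha> * (-1) ^ (\<Sum>i<n. \<alpha> i) *
         ev (ders (map (unit_vec n) (rev (mlist n \<alpha>))) (fE n (SIG n c i))) x)"
    if i: "i \<le> n" for i
  proof -
    let ?As = "\<lambda>k. if k < i then B k else B (Suc k)"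
    have As: "\<forall>k<n. ?As k \<in> GL n" using B i by auto
    have eqm: "mat n n (\<lambda>(r, k). col (?As k) (sel_index n (?As k) x) $ r) = SIG n c i"
      unfolding SIG_def c_def cidx_def by (intro eq_matI) auto
    note pe = psi_eq[OF x False As]
    show ?thesis unfolding pe(1) eqm
      using DOP[OF SIG_carrier x] pe(2) unfolding eqm by simp
  qed
  have "(\<Sum>i\<le>n. (-1) ^ i * psi n (\<lambda>k. if k < i then B k else B (Suc k)) P x)
     = (\<Sum>\<alpha>\<in>{\<alpha>. P \<alpha> \<noteq> 0}. P \<alpha> * (-1) ^ (\<Sum>i<n. \<alpha> i) *
         (\<Sum>i\<le>n. (-1) ^ i * ev (ders (map (unit_vec n) (rev (mlist n \<alpha>))) (fE n (SIG n c i))) x))"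
    by (simp add: psi_i sum_distrib_left sum_distrib_right mult_ac sum.swap[of _ "{..n}"])
  also have "\<dots> = 0"
  proof -
    have us: "set (map (unit_vec n) (rev (mlist n \<alpha>))) \<subseteq> carrier_vec n" for \<alpha> by auto
    show ?thesis by (intro sum.neutral ballI) (simp add: ZERO[OF x c nz us])
  qed
  finally show ?thesis .
qed




lemma PEXP:
  "(\<Prod>j<m. \<Sum>k<n. f j k) = (\<Sum>is\<in>TT n m. \<Prod>j<m. f j (is ! j :: nat)) " for f :: "nat \<Rightarrow> nat \<Rightarrow> complex"
proof (induction m arbitrary: f)
  case 0
  have "TT n 0 = {[]}" unfolding TT_def by auto
  then show ?case by simp
next
  case (Suc m)
  have "(\<Prod>j<Suc m. \<Sum>k<n. f j k) = (\<Sum>k<n. f 0 k) * (\<Prod>j<m. \<Sum>k<n. f (Suc j) k)"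
    by (simp del: prod.lessThan_Suc add: prod.lessThan_Suc_shift)
  also have "\<dots> = (\<Sum>k<n. f 0 k) * (\<Sum>is\<in>TT n m. \<Prod>j<m. f (Suc j) (is ! j))"
    using Suc[of "\<lambda>j. f (Suc j)"] by simp
  also have "\<dots> = (\<Sum>is\<in>TT n (Suc m). \<Prod>j<Suc m. f j (is ! j))"
    unfolding sum_TT_Suc
    by (simp del: prod.lessThan_Suc add: prod.lessThan_Suc_shift sum_distrib_left sum_distrib_right
        sum.swap[of _ "{..<n}"])
  finally show ?case .
qed

lemma prod_list_rev_map: "prod_list (map z (rev xs)) = prod_list (map z xs)" for z :: "nat \<Rightarrow> complex"
  by (induction xs) (auto simp: mult.commute)

lemma prod_list_nth: "prod_list (map z xs) = (\<Prod>j<length xs. z (xs ! j))" for z :: "nat \<Rightarrow> complex"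
  using prod.list_conv_set_nth[of "map z xs"] by (simp add: lessThan_atLeast0)

lemma prod_mlist: "(\<Prod>i<n. z i ^ \<alpha> i) = prod_list (map z (mlist n \<alpha>))" for z :: "nat \<Rightarrow> complex"
proof (induction n)
  case 0
  then show ?case by (simp add: mlist_def)
next
  case (Suc n)
  have "mlist (Suc n) \<alpha> = mlist n \<alpha> @ replicate (\<alpha> n) n" by (simp add: mlist_def)
  then show ?case using Suc by simp
qed

lemma count_list_replicate': "count_list (replicate m x) k = (if k = x then m else 0)"
  by (induction m) auto

lemma count_mlist: "count_list (mlist n \<beta>) k = (if k < n then \<beta> k else 0)"
proof (induction n)
  case 0
  then show ?case by (simp add: mlist_def)
next
  case (Suc n)
  have "mlist (Suc n) \<beta> = mlist n \<beta> @ replicate (\<alpha>' n) n" if "\<alpha>' = \<beta>" for \<alpha>'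
    using that by (simp add: mlist_def)
  then have "count_list (mlist (Suc n) \<beta>) k = count_list (mlist n \<beta>) k + count_list (replicate (\<beta> n) n) k"
    by simp
  moreover have "count_list (replicate (\<beta> n) n) k = (if k = n then \<beta> n else 0)"
    by (simp only: count_list_replicate')
  ultimately show ?case using Suc by auto
qed

lemma prod_list_count:
  assumes "set is \<subseteq> {..<(n::nat)}"
  shows "prod_list (map g is) = (\<Prod>k<n. (g k :: complex) ^ count_list is k)"
  using assms
proof (induction "is")
  case Nil
  then show ?case by simp
next
  case (Cons a "is")
  have a: "a < n" using Cons by auto
  have "(\<Prod>k<n. g k ^ count_list (a # is) k) = (\<Prod>k<n. (if k = a then g k else 1) * g k ^ count_list is k)"
    by (intro prod.cong) auto
  also have "\<dots> = (\<Prod>k<n. (if k = a then g k else 1)) * (\<Prod>k<n. g k ^ count_list is k)"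
    by (simp add: prod.distrib)
  also have "(\<Prod>k<n. (if k = a then g k else 1)) = g a"
    using a by (simp add: prod.delta)
  finally show ?case using Cons by simp
qed

definition cnt :: "nat list \<Rightarrow> nat \<Rightarrow> nat" where
  "cnt is = (\<lambda>k. count_list is k)"

definition aa :: "nat \<Rightarrow> complex mat \<Rightarrow> (nat \<Rightarrow> nat) \<Rightarrow> nat list \<Rightarrow> complex" where
  "aa n A \<alpha> is = (\<Prod>j<length (mlist n \<alpha>). A $$ (rev (mlist n \<alpha>) ! j, is ! j))"

definition PT :: "nat \<Rightarrow> complex mat \<Rightarrow> coeffs \<Rightarrow> coeffs" where
  "PT n A P \<beta> = (\<Sum>\<alpha>\<in>{\<alpha>. P \<alpha> \<noteq> 0}. P \<alpha> *
      (\<Sum>is\<in>{is \<in> TT n (length (mlist n \<alpha>)). cnt is = \<beta>}. aa n A \<alpha> is))"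

definition BS :: "nat \<Rightarrow> coeffs \<Rightarrow> (nat \<Rightarrow> nat) set" where
  "BS n P = (\<Union>\<alpha>\<in>{\<alpha>. P \<alpha> \<noteq> 0}. cnt ` TT n (length (mlist n \<alpha>)))"

lemma finite_BS: "P \<in> polys n \<Longrightarrow> finite (BS n P)"
  unfolding BS_def polys_def using finite_TT by auto

lemma supp_PT: "{\<beta>. PT n A P \<beta> \<noteq> 0} \<subseteq> BS n P"
proof
  fix \<beta> assume "\<beta> \<in> {\<beta>. PT n A P \<beta> \<noteq> 0}"
  then obtain \<alpha> where "P \<alpha> \<noteq> 0"
    "(\<Sum>is\<in>{is \<in> TT n (length (mlist n \<alpha>)). cnt is = \<beta>}. aa n A \<alpha> is) \<noteq> 0"
    unfolding PT_def by (auto elim: sum.not_neutral_contains_not_neutral)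
  then obtain "is" where "is \<in> TT n (length (mlist n \<alpha>))" "cnt is = \<beta>"
    by (auto elim: sum.not_neutral_contains_not_neutral)
  then show "\<beta> \<in> BS n P" unfolding BS_def using \<open>P \<alpha> \<noteq> 0\<close> by auto
qed

lemma REGROUP:
  assumes P: "P \<in> polys n"
  shows "(\<Sum>\<beta>\<in>{\<beta>. PT n A P \<beta> \<noteq> 0}. PT n A P \<beta> * h \<beta>) =
    (\<Sum>\<alpha>\<in>{\<alpha>. P \<alpha> \<noteq> 0}. P \<alpha> * (\<Sum>is\<in>TT n (length (mlist n \<alpha>)). aa n A \<alpha> is * h (cnt is)))"
proof -
  have fS: "finite {\<alpha>. P \<alpha> \<noteq> 0}" using P unfolding polys_def by auto
  have "(\<Sum>\<beta>\<in>{\<beta>. PT n A P \<beta> \<noteq> 0}. PT n A P \<beta> * h \<beta>) = (\<Sum>\<beta>\<in>BS n P. PT n A P \<beta> * h \<beta>)"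
    by (intro sum.mono_neutral_left finite_BS P supp_PT) auto
  also have "\<dots> = (\<Sum>\<beta>\<in>BS n P. \<Sum>\<alpha>\<in>{\<alpha>. P \<alpha> \<noteq> 0}. P \<alpha> *
      (\<Sum>is\<in>{is \<in> TT n (length (mlist n \<alpha>)). cnt is = \<beta>}. aa n A \<alpha> is * h (cnt is)))"
    unfolding PT_def sum_distrib_right
    by (intro sum.cong refl) (simp add: sum_distrib_right mult.assoc)
  also have "\<dots> = (\<Sum>\<alpha>\<in>{\<alpha>. P \<alpha> \<noteq> 0}. P \<alpha> * (\<Sum>\<beta>\<in>BS n P.
      (\<Sum>is\<in>{is \<in> TT n (length (mlist n \<alpha>)). cnt is = \<beta>}. aa n A \<alpha> is * h (cnt is))))"
    by (simp add: sum.swap[of _ "BS n P"] sum_distrib_left)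
  also have "\<dots> = (\<Sum>\<alpha>\<in>{\<alpha>. P \<alpha> \<noteq> 0}. P \<alpha> * (\<Sum>is\<in>TT n (length (mlist n \<alpha>)). aa n A \<alpha> is * h (cnt is)))"
  proof (intro sum.cong refl arg_cong[where f="\<lambda>z. _ * z"])
    fix \<alpha> assume "\<alpha> \<in> {\<alpha>. P \<alpha> \<noteq> 0}"
    then have "cnt ` TT n (length (mlist n \<alpha>)) \<subseteq> BS n P" unfolding BS_def by auto
    then show "(\<Sum>\<beta>\<in>BS n P. \<Sum>is\<in>{is \<in> TT n (length (mlist n \<alpha>)). cnt is = \<beta>}. aa n A \<alpha> is * h (cnt is))
       = (\<Sum>is\<in>TT n (length (mlist n \<alpha>)). aa n A \<alpha> is * h (cnt is))"
      by (intro sum.group finite_TT finite_BS P)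
  qed
  finally show ?thesis .
qed

lemma PT_polys:
  assumes P: "P \<in> polys n"
  shows "PT n A P \<in> polys n"
proof -
  have "finite {\<beta>. PT n A P \<beta> \<noteq> 0}" using finite_subset[OF supp_PT finite_BS[OF P]] .
  moreover have "\<forall>i\<ge>n. \<beta> i = 0" if "PT n A P \<beta> \<noteq> 0" for \<beta>
  proof -
    have "\<beta> \<in> BS n P" using supp_PT that by auto
    then obtain "is" where "set is \<subseteq> {..<n}" "\<beta> = cnt is" unfolding BS_def TT_def by auto
    then show ?thesis unfolding cnt_def by (auto simp: count_list_0_iff)
  qed
  ultimately show ?thesis unfolding polys_def by auto
qed

lemma PT_eval:
  assumes P: "P \<in> polys n" and A: "A \<in> carrier_mat n n" and y: "y \<in> carrier_vec n"
  shows "poly_eval n (PT n A P) y = poly_eval n P (A *\<^sub>v y)"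
proof -
  define h where "h \<beta> = (\<Prod>k<n. (y $ k) ^ \<beta> k)" for \<beta> :: "nat \<Rightarrow> nat"
  have "poly_eval n P (A *\<^sub>v y) = (\<Sum>\<alpha>\<in>{\<alpha>. P \<alpha> \<noteq> 0}. P \<alpha> *
      (\<Sum>is\<in>TT n (length (mlist n \<alpha>)). aa n A \<alpha> is * h (cnt is)))"
    unfolding poly_eval_def
  proof (intro sum.cong refl arg_cong[where f="\<lambda>z. _ * z"])
    fix \<alpha> :: "nat \<Rightarrow> nat"
    let ?r = "rev (mlist n \<alpha>)" and ?m = "length (mlist n \<alpha>)"
    have r: "\<And>j. j < ?m \<Longrightarrow> ?r ! j < n" using set_mlist
      by (metis length_rev lessThan_iff nth_mem set_rev subsetD)
    have "(\<Prod>i<n. (A *\<^sub>v y) $ i ^ \<alpha> i) = prod_list (map (\<lambda>i. (A *\<^sub>v y) $ i) ?r)"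
      by (simp add: prod_mlist prod_list_rev_map)
    also have "\<dots> = (\<Prod>j<?m. \<Sum>k<n. A $$ (?r ! j, k) * y $ k)"
      unfolding prod_list_nth using r A y
      by (intro prod.cong refl) (auto simp: scalar_prod_def row_def lessThan_atLeast0)
    also have "\<dots> = (\<Sum>is\<in>TT n ?m. \<Prod>j<?m. A $$ (?r ! j, is ! j) * y $ (is ! j))"
      by (rule PEXP)
    also have "\<dots> = (\<Sum>is\<in>TT n ?m. aa n A \<alpha> is * h (cnt is))"
    proof (intro sum.cong refl)
      fix "is" assume "is \<in> TT n ?m"
      then have "set is \<subseteq> {..<n}" "length is = ?m" unfolding TT_def by auto
      then have "(\<Prod>j<?m. y $ (is ! j)) = h (cnt is)"
        using prod_list_nth[of "\<lambda>k. y $ k" "is"] prod_list_count[of "is" n "\<lambda>k. y $ k"]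
        unfolding h_def cnt_def by simp
      then show "(\<Prod>j<?m. A $$ (?r ! j, is ! j) * y $ (is ! j)) = aa n A \<alpha> is * h (cnt is)"
        unfolding aa_def by (simp add: prod.distrib)
    qed
    finally show "(\<Prod>i<n. (A *\<^sub>v y) $ i ^ \<alpha> i) = (\<Sum>is\<in>TT n ?m. aa n A \<alpha> is * h (cnt is))" .
  qed
  also have "\<dots> = poly_eval n (PT n A P) y"
    unfolding poly_eval_def using REGROUP[OF P, of A h] unfolding h_def by simp
  finally show ?thesis ..
qed




lemma kron_inj:
  fixes \<alpha> \<beta> :: "nat \<Rightarrow> nat"
  assumes "\<forall>i<n. \<alpha> i < N" "\<forall>i<n. \<beta> i < N" "(\<Sum>i<n. \<alpha> i * N ^ i) = (\<Sum>i<n. \<beta> i * N ^ i)"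
  shows "\<forall>i<n. \<alpha> i = \<beta> i"
  using assms
proof (induction n arbitrary: \<alpha> \<beta>)
  case 0
  then show ?case by simp
next
  case (Suc n)
  have N: "N > 0" using Suc.prems(1) by auto
  have split: "(\<Sum>i<Suc n. \<gamma> i * N ^ i) = \<gamma> 0 + N * (\<Sum>i<n. \<gamma> (Suc i) * N ^ i)" for \<gamma> :: "nat \<Rightarrow> nat"
    by (simp del: sum.lessThan_Suc add: sum.lessThan_Suc_shift sum_distrib_left mult_ac)
  define X where "X = (\<Sum>i<n. \<alpha> (Suc i) * N ^ i)"
  define Y where "Y = (\<Sum>i<n. \<beta> (Suc i) * N ^ i)"
  have eq: "\<alpha> 0 + N * X = \<beta> 0 + N * Y" using Suc.prems(3) unfolding split X_def Y_def .
  have a0: "\<alpha> 0 < N" "\<beta> 0 < N" using Suc.prems by auto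
  have "\<alpha> 0 = (\<alpha> 0 + N * X) mod N" using a0 by simp
  also have "\<dots> = (\<beta> 0 + N * Y) mod N" using eq by simp
  also have "\<dots> = \<beta> 0" using a0 by simp
  finally have e0: "\<alpha> 0 = \<beta> 0" .
  have "X = (\<alpha> 0 + N * X) div N" using a0 N by simp
  also have "\<dots> = (\<beta> 0 + N * Y) div N" using eq by simp
  also have "\<dots> = Y" using a0 N by simp
  finally have "X = Y" .
  have ha: "\<forall>i<n. \<alpha> (Suc i) < N" using Suc.prems(1) by simp
  have hb: "\<forall>i<n. \<beta> (Suc i) < N" using Suc.prems(2) by simp
  have rest: "\<forall>i<n. \<alpha> (Suc i) = \<beta> (Suc i)"
    using Suc.IH[OF ha hb] \<open>X = Y\<close> unfolding X_def Y_def by blast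
  show ?case
  proof (intro allI impI)
    fix i assume i: "i < Suc n"
    show "\<alpha> i = \<beta> i"
    proof (cases i)
      case 0
      then show ?thesis using e0 by simp
    next
      case (Suc j)
      then show ?thesis using rest i by simp
    qed
  qed
qed

lemma POLY_UNIQ:
  assumes c: "c \<in> polys n" and d: "d \<in> polys n"
    and eq: "\<forall>y\<in>carrier_vec n. poly_eval n c y = poly_eval n d y"
  shows "c = d"
proof -
  define S where "S = {\<alpha>. c \<alpha> \<noteq> 0} \<union> {\<alpha>. d \<alpha> \<noteq> 0}"
  have fS: "finite S" using c d unfolding S_def polys_def by auto
  have Sz: "\<forall>i\<ge>n. \<alpha> i = 0" if "\<alpha> \<in> S" for \<alpha> using c d that unfolding S_def polys_def by auto
  define N where "N = Suc (\<Sum>\<alpha>\<in>S. \<Sum>i<n. \<alpha> i)"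
  have lt: "\<alpha> i < N" if "\<alpha> \<in> S" "i < n" for \<alpha> i
  proof -
    have "\<alpha> i \<le> (\<Sum>i<n. \<alpha> i)" using that by (intro member_le_sum) auto
    also have "\<dots> \<le> (\<Sum>\<alpha>\<in>S. \<Sum>i<n. \<alpha> i)" using that fS by (intro member_le_sum) auto
    finally show ?thesis unfolding N_def by simp
  qed
  define \<kappa> where "\<kappa> \<alpha> = (\<Sum>i<n. \<alpha> i * N ^ i)" for \<alpha> :: "nat \<Rightarrow> nat"
  have inj: "\<alpha> = \<beta>" if "\<alpha> \<in> S" "\<beta> \<in> S" "\<kappa> \<alpha> = \<kappa> \<beta>" for \<alpha> \<beta>
  proof
    fix i show "\<alpha> i = \<beta> i"
    proof (cases "i < n")
      case True
      then show ?thesis using kron_inj[of n \<alpha> N \<beta>] that lt unfolding \<kappa>_def by auto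
    next
      case False
      then show ?thesis using Sz[OF that(1)] Sz[OF that(2)] by auto
    qed
  qed
  define yt where "yt t = vec n (\<lambda>i. t ^ (N ^ i))" for t :: complex
  have mon: "(\<Prod>i<n. (yt t $ i) ^ \<alpha> i) = t ^ \<kappa> \<alpha>" for t \<alpha>
    unfolding yt_def \<kappa>_def power_sum
    by (intro prod.cong refl) (simp add: power_mult[symmetric] mult.commute)
  have evS: "poly_eval n e (yt t) = (\<Sum>\<alpha>\<in>S. e \<alpha> * t ^ \<kappa> \<alpha>)"
    if "{\<alpha>. e \<alpha> \<noteq> 0} \<subseteq> S" for e t
    unfolding poly_eval_def mon
    by (intro sum.mono_neutral_left fS that) auto
  define e where "e \<alpha> = c \<alpha> - d \<alpha>" for \<alpha>
  have zero: "(\<Sum>\<alpha>\<in>S. e \<alpha> * t ^ \<kappa> \<alpha>) = 0" for t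
  proof -
    have "yt t \<in> carrier_vec n" unfolding yt_def by simp
    then have "poly_eval n c (yt t) = poly_eval n d (yt t)" using eq by auto
    then show ?thesis unfolding e_def using evS[of c t] evS[of d t]
      by (simp add: S_def left_diff_distrib sum_subtractf)
  qed
  define K where "K = (\<Sum>\<alpha>\<in>S. \<kappa> \<alpha>)"
  have kK: "\<kappa> \<alpha> \<le> K" if "\<alpha> \<in> S" for \<alpha> unfolding K_def using fS that by (intro member_le_sum) auto
  define co where "co p = (\<Sum>\<alpha>\<in>{\<alpha> \<in> S. \<kappa> \<alpha> = p}. e \<alpha>)" for p
  have "(\<Sum>p\<le>K. co p * t ^ p) = 0" for t
  proof -
    have "(\<Sum>p\<le>K. co p * t ^ p) = (\<Sum>p\<le>K. \<Sum>\<alpha>\<in>{\<alpha> \<in> S. \<kappa> \<alpha> = p}. e \<alpha> * t ^ \<kappa> \<alpha>)"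
      unfolding co_def sum_distrib_right by (intro sum.cong refl) auto
    also have "\<dots> = (\<Sum>\<alpha>\<in>S. e \<alpha> * t ^ \<kappa> \<alpha>)"
      using kK by (intro sum.group fS) auto
    finally show ?thesis using zero by simp
  qed
  then have co0: "\<forall>p\<le>K. co p = 0" using polyfun_eq_0[of co K] by blast
  have "e \<alpha> = 0" if "\<alpha> \<in> S" for \<alpha>
  proof -
    have "{\<beta> \<in> S. \<kappa> \<beta> = \<kappa> \<alpha>} = {\<alpha>}" using inj that by auto
    then have "co (\<kappa> \<alpha>) = e \<alpha>" unfolding co_def by simp
    then show ?thesis using co0 kK that by auto
  qed
  then show ?thesis unfolding e_def S_def by (intro ext) (metis (mono_tags) UnI1 UnI2 eq_iff_diff_eq_0 mem_Collect_eq)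
qed

lemma poly_transp_eq:
  assumes P: "P \<in> polys n" and A: "A \<in> carrier_mat n n"
  shows "poly_transp n A P = PT n A P"
  unfolding poly_transp_def
proof (rule the_equality)
  show "PT n A P \<in> polys n \<and> (\<forall>y\<in>carrier_vec n. poly_eval n (PT n A P) y = poly_eval n P (A *\<^sub>v y))"
    using PT_polys[OF P] PT_eval[OF P A] by auto
  fix c' assume "c' \<in> polys n \<and> (\<forall>y\<in>carrier_vec n. poly_eval n c' y = poly_eval n P (A *\<^sub>v y))"
  then show "c' = PT n A P"
    using POLY_UNIQ[of c' n "PT n A P"] PT_polys[OF P] PT_eval[OF P A] by auto
qed




primrec pull :: "complex mat \<Rightarrow> expr \<Rightarrow> expr" where
  "pull A (Cst c) = Cst c"
| "pull A (Lin v) = Lin (A *\<^sub>v v)"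
| "pull A (Inv v) = Inv (A *\<^sub>v v)"
| "pull A (Add a b) = Add (pull A a) (pull A b)"
| "pull A (Mul a b) = Mul (pull A a) (pull A b)"
| "pull A (Smul c a) = Smul c (pull A a)"

lemma tsp:
  fixes A :: "complex mat"
  assumes "A \<in> carrier_mat n n" "u \<in> carrier_vec n" "v \<in> carrier_vec n"
  shows "u \<bullet> (A *\<^sub>v v) = (transpose_mat A *\<^sub>v u) \<bullet> v"
  using transpose_vec_mult_scalar[OF assms(1) assms(3) assms(2)] by simp

lemma der_pull:
  assumes A: "A \<in> carrier_mat n n" and "wf n e" and u: "u \<in> carrier_vec n"
  shows "der u (pull A e) = pull A (der (transpose_mat A *\<^sub>v u) e)"
  using assms(2) by (induction e) (auto simp: tsp[OF A u])

lemma wf_pull: "A \<in> carrier_mat n n \<Longrightarrow> wf n e \<Longrightarrow> wf n (pull A e)"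
  by (induction e) auto

lemma ders_pull:
  assumes A: "A \<in> carrier_mat n n" and "wf n e" and "set us \<subseteq> carrier_vec n"
  shows "ders us (pull A e) = pull A (ders (map (\<lambda>u. transpose_mat A *\<^sub>v u) us) e)"
  using assms(2,3)
proof (induction us arbitrary: e)
  case Nil
  then show ?case by simp
next
  case (Cons u us)
  then show ?case using der_pull[OF A] wf_der by simp
qed

lemma ev_pull:
  assumes A: "A \<in> carrier_mat n n" and "wf n e" and y: "y \<in> carrier_vec n"
  shows "ev (pull A e) y = ev e (transpose_mat A *\<^sub>v y)"
  using assms(2) by (induction e) (auto simp: tsp[OF A y])

lemma pull_prodE: "pull A (prodE es) = prodE (map (pull A) es)"
  by (induction es) auto

lemma DOPg:
  assumes "wf n E" "y \<in> UU n E"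
  shows "diff_op n P (ev E) y = (\<Sum>\<alpha>\<in>{\<alpha>. P \<alpha> \<noteq> 0}. P \<alpha> * (-1) ^ (\<Sum>i<n. \<alpha> i) *
     ev (ders (map (unit_vec n) (rev (mlist n \<alpha>))) E) y)"
  unfolding diff_op_def using MPD[OF assms(1)] assms(2) by simp

lemma mset_mlist_cnt:
  assumes "set is \<subseteq> {..<n}"
  shows "mset (mlist n (cnt is)) = mset is"
proof (rule multiset_eqI)
  fix k
  show "count (mset (mlist n (cnt is))) k = count (mset is) k"
  proof (cases "k < n")
    case True
    then show ?thesis by (simp add: count_mset count_mlist cnt_def)
  next
    case False
    then have "k \<notin> set is" using assms by auto
    then show ?thesis using False by (simp add: count_mset count_mlist cnt_def count_list_0_iff)
  qed
qed

lemma CORE: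
  assumes A: "A \<in> carrier_mat n n" and wE: "wf n E" and y: "y \<in> UU n E"
  shows "ev (ders (map (\<lambda>u. transpose_mat A *\<^sub>v u) (map (unit_vec n) (rev (mlist n \<alpha>)))) E) y
    = (\<Sum>is\<in>TT n (length (mlist n \<alpha>)). aa n A \<alpha> is *
         ev (ders (map (unit_vec n) (rev (mlist n (cnt is)))) E) y)"
proof -
  let ?r = "rev (mlist n \<alpha>)"
  let ?W = "map (\<lambda>u. transpose_mat A *\<^sub>v u) (map (unit_vec n) ?r)"
  have sW: "set ?W \<subseteq> carrier_vec n" using A by auto
  have lW: "length ?W = length (mlist n \<alpha>)" by simp
  have r: "\<And>j. j < length (mlist n \<alpha>) \<Longrightarrow> ?r ! j < n" using set_mlist
    by (metis length_rev lessThan_iff nth_mem set_rev subsetD)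
  show ?thesis
    unfolding EXP[OF sW wE y] lW
  proof (intro sum.cong refl)
    fix "is" assume "is": "is \<in> TT n (length (mlist n \<alpha>))"
    then have sis: "set is \<subseteq> {..<n}" and lis: "length is = length (mlist n \<alpha>)" unfolding TT_def by auto
    have "(\<Prod>j<length (mlist n \<alpha>). ?W ! j $ (is ! j)) = aa n A \<alpha> is"
      unfolding aa_def
    proof (intro prod.cong refl)
      fix j assume "j \<in> {..<length (mlist n \<alpha>)}"
      then have j: "j < length (mlist n \<alpha>)" by simp
      have isj: "is ! j < n" using sis lis j by (metis lessThan_iff nth_mem subsetD)
      have "?W ! j = transpose_mat A *\<^sub>v unit_vec n (?r ! j)" using j by simp
      then show "?W ! j $ (is ! j) = A $$ (?r ! j, is ! j)"
        using A isj r[OF j] by (simp add: row_transpose)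
    qed
    moreover have "ev (ders (map (unit_vec n) is) E) y = ev (ders (map (unit_vec n) (rev (mlist n (cnt is)))) E) y"
      by (rule PERM[OF _ wE y]) (use mset_mlist_cnt[OF sis] in auto)
    ultimately show "(\<Prod>j<length (mlist n \<alpha>). ?W ! j $ (is ! j)) * ev (ders (map (unit_vec n) is) E) y =
         aa n A \<alpha> is * ev (ders (map (unit_vec n) (rev (mlist n (cnt is)))) E) y" by simp
  qed
qed




lemma GL_mult: "A \<in> GL n \<Longrightarrow> B \<in> GL n \<Longrightarrow> A * B \<in> GL n"
  unfolding GL_def by (auto simp: det_mult)

lemma nz_transp:
  fixes x :: "complex vec"
  assumes A: "A \<in> GL n" and x: "x \<in> carrier_vec n" "x \<noteq> 0\<^sub>v n"
  shows "transpose_mat A *\<^sub>v x \<noteq> 0\<^sub>v n"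
proof
  assume "transpose_mat A *\<^sub>v x = 0\<^sub>v n"
  moreover have Ac: "A \<in> carrier_mat n n" "det A \<noteq> 0" using A unfolding GL_def by auto
  ultimately have "det (transpose_mat A) = 0"
    using det_0_iff_vec_prod_zero[of "transpose_mat A" n] x by auto
  then show False using det_transpose[OF Ac(1)] Ac(2) by simp
qed

theorem part1:
  fixes n :: nat and A :: "complex mat" and As :: "nat \<Rightarrow> complex mat"
    and P :: coeffs and x :: "complex vec"
  assumes AG: "A \<in> GL n" and AsG: "\<forall>k<n. As k \<in> GL n"
    and P: "P \<in> homog_polys n" and x: "x \<in> carrier_vec n"
  shows "psi n (\<lambda>k. A * As k) P x
           = det A * psi n As (poly_transp n A P) (transpose_mat A *\<^sub>v x)"
proof -
  have A: "A \<in> carrier_mat n n" using AG unfolding GL_def by auto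
  have Pp: "P \<in> polys n" using P unfolding homog_polys_def by auto
  define x' where "x' = transpose_mat A *\<^sub>v x"
  have x'c: "x' \<in> carrier_vec n" unfolding x'_def using A x by (metis mult_mat_vec_carrier transpose_carrier_mat)
  show ?thesis
  proof (cases "x = 0\<^sub>v n")
    case True
    have "x' = 0\<^sub>v n" unfolding x'_def True using A by (intro eq_vecI) (auto simp: scalar_prod_def)
    then show ?thesis unfolding psi_def x'_def[symmetric] using True by simp
  next
    case False
    have x'0: "x' \<noteq> 0\<^sub>v n" unfolding x'_def using nz_transp[OF AG x False] .
    have AAsG: "\<forall>k<n. A * As k \<in> GL n" using AsG GL_mult[OF AG] by auto
    define v where "v = (\<lambda>k. col (As k) (sel_index n (As k) x'))"
    define \<sigma> where "\<sigma> = mat n n (\<lambda>(i, k). v k $ i)"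
    note pe' = psi_eq[OF x'c x'0 AsG]
    have vc: "\<forall>k<n. v k \<in> carrier_vec n" using pe'(3) unfolding v_def .
    have \<sigma>c: "\<sigma> \<in> carrier_mat n n" unfolding \<sigma>_def by simp
    have nz': "\<forall>j<n. x' \<bullet> col \<sigma> j \<noteq> 0" using pe'(2) unfolding \<sigma>_def v_def .
    have colsig: "\<And>j. j < n \<Longrightarrow> col \<sigma> j = v j" unfolding \<sigma>_def using col_mat_vecs[OF vc] by simp
    have sel_eq: "sel_index n (A * As k) x = sel_index n (As k) x'" if k: "k < n" for k
    proof -
      have Ask: "As k \<in> carrier_mat n n" using AsG k unfolding GL_def by auto
      have "(\<lambda>j. j < n \<and> x \<bullet> col (A * As k) j \<noteq> 0) = (\<lambda>j. j < n \<and> x' \<bullet> col (As k) j \<noteq> 0)"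
      proof (intro ext)
        fix j
        show "(j < n \<and> x \<bullet> col (A * As k) j \<noteq> 0) = (j < n \<and> x' \<bullet> col (As k) j \<noteq> 0)"
        proof (cases "j < n")
          case True
          have "col (As k) j \<in> carrier_vec n" using Ask col_dim[of "As k" j] by (simp add: carrier_matD)
          then have "x \<bullet> col (A * As k) j = x' \<bullet> col (As k) j"
            using True A Ask x unfolding x'_def by (simp add: tsp[OF A x])
          then show ?thesis by simp
        qed simp
      qed
      then show ?thesis unfolding sel_index_def by simp
    qed
    have v'eq: "col (A * As k) (sel_index n (A * As k) x) = A *\<^sub>v v k" if k: "k < n" for k
    proof -
      have Ask: "As k \<in> carrier_mat n n" using AsG k unfolding GL_def by auto
      have "sel_index n (As k) x' < n" using sel_ok[OF x'c x'0] AsG k by auto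
      then show ?thesis unfolding sel_eq[OF k] v_def using A Ask by simp
    qed
    have matL: "mat n n (\<lambda>(i, k). col (A * As k) (sel_index n (A * As k) x) $ i) = A * \<sigma>"
    proof (rule eq_matI)
      fix i j assume "i < dim_row (A * \<sigma>)" "j < dim_col (A * \<sigma>)"
      then have ij: "i < n" "j < n" using A \<sigma>c by auto
      show "mat n n (\<lambda>(i, k). col (A * As k) (sel_index n (A * As k) x) $ i) $$ (i, j) = (A * \<sigma>) $$ (i, j)"
        using ij A \<sigma>c v'eq[OF ij(2)] colsig[OF ij(2)] by (simp add: col_def[symmetric])
    qed (use A \<sigma>c in auto)
    have LHS0: "psi n (\<lambda>k. A * As k) P x = diff_op n P (f_fun n (A * \<sigma>)) x"
      using psi_eq(1)[OF x False AAsG] unfolding matL .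
    define EA where "EA = Smul (det A) (pull A (fE n \<sigma>))"
    have pullf: "pull A (fE n \<sigma>) = Smul (det \<sigma>) (prodE (map (\<lambda>j. Inv (A *\<^sub>v col \<sigma> j)) [0..<n]))"
      unfolding fE_def by (simp add: pull_prodE comp_def)
    have fEA: "f_fun n (A * \<sigma>) = ev EA"
    proof (rule ext)
      fix y
      have "(\<Prod>j<n. inverse (y \<bullet> col (A * \<sigma>) j)) = (\<Prod>j<n. inverse (y \<bullet> (A *\<^sub>v col \<sigma> j)))"
        using A \<sigma>c by (intro prod.cong refl) simp
      then show "f_fun n (A * \<sigma>) y = ev EA y"
        unfolding f_fun_ev ev_fE EA_def pullf
        by (simp add: ev_prodE comp_def prod_upt_list det_mult[OF A \<sigma>c])
    qed
    have wEA: "wf n EA" unfolding EA_def using wf_pull[OF A wf_fE[OF \<sigma>c]] by simp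
    have xEA: "x \<in> UU n EA"
    proof -
      have "x \<bullet> (A *\<^sub>v col \<sigma> j) \<noteq> 0" if "j < n" for j
        using nz' that tsp[OF A x, of "col \<sigma> j"] colsig[OF that] vc unfolding x'_def by auto
      then show ?thesis unfolding UU_def EA_def pullf using x by (auto simp: invs_prodE)
    qed
    have x'E: "x' \<in> UU n (fE n \<sigma>)" unfolding UU_fE using x'c nz' by auto
    define \<tau> where "\<tau> \<beta> = ev (ders (map (unit_vec n) (rev (mlist n \<beta>))) (fE n \<sigma>)) x'" for \<beta>
    have LHS: "psi n (\<lambda>k. A * As k) P x = det A * (\<Sum>\<alpha>\<in>{\<alpha>. P \<alpha> \<noteq> 0}. P \<alpha> * (-1) ^ (\<Sum>i<n. \<alpha> i) *
        (\<Sum>is\<in>TT n (length (mlist n \<alpha>)). aa n A \<alpha> is * \<tau> (cnt is)))"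
    proof -
      have "psi n (\<lambda>k. A * As k) P x = (\<Sum>\<alpha>\<in>{\<alpha>. P \<alpha> \<noteq> 0}. P \<alpha> * (-1) ^ (\<Sum>i<n. \<alpha> i) *
          ev (ders (map (unit_vec n) (rev (mlist n \<alpha>))) EA) x)"
        unfolding LHS0 fEA by (rule DOPg[OF wEA xEA])
      also have "\<dots> = (\<Sum>\<alpha>\<in>{\<alpha>. P \<alpha> \<noteq> 0}. P \<alpha> * (-1) ^ (\<Sum>i<n. \<alpha> i) *
          (det A * (\<Sum>is\<in>TT n (length (mlist n \<alpha>)). aa n A \<alpha> is * \<tau> (cnt is))))"
      proof (intro sum.cong refl arg_cong[where f="\<lambda>z. _ * z"])
        fix \<alpha> :: "nat \<Rightarrow> nat"
        have su: "set (map (unit_vec n) (rev (mlist n \<alpha>))) \<subseteq> carrier_vec n" by auto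
        have "ev (ders (map (unit_vec n) (rev (mlist n \<alpha>))) EA) x
          = det A * ev (pull A (ders (map (\<lambda>u. transpose_mat A *\<^sub>v u) (map (unit_vec n) (rev (mlist n \<alpha>)))) (fE n \<sigma>))) x"
          unfolding EA_def ders_Smul ders_pull[OF A wf_fE[OF \<sigma>c] su] by simp
        also have "\<dots> = det A * ev (ders (map (\<lambda>u. transpose_mat A *\<^sub>v u) (map (unit_vec n) (rev (mlist n \<alpha>)))) (fE n \<sigma>)) x'"
          unfolding x'_def using ev_pull[OF A wf_ders[OF wf_fE[OF \<sigma>c]] x] by simp
        also have "\<dots> = det A * (\<Sum>is\<in>TT n (length (mlist n \<alpha>)). aa n A \<alpha> is * \<tau> (cnt is))"
          unfolding CORE[OF A wf_fE[OF \<sigma>c] x'E] \<tau>_def ..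
        finally show "ev (ders (map (unit_vec n) (rev (mlist n \<alpha>))) EA) x
           = det A * (\<Sum>is\<in>TT n (length (mlist n \<alpha>)). aa n A \<alpha> is * \<tau> (cnt is))" .
      qed
      also have "\<dots> = det A * (\<Sum>\<alpha>\<in>{\<alpha>. P \<alpha> \<noteq> 0}. P \<alpha> * (-1) ^ (\<Sum>i<n. \<alpha> i) *
        (\<Sum>is\<in>TT n (length (mlist n \<alpha>)). aa n A \<alpha> is * \<tau> (cnt is)))"
        by (simp add: sum_distrib_left mult_ac)
      finally show ?thesis .
    qed
    have RHS: "psi n As (poly_transp n A P) x' = (\<Sum>\<alpha>\<in>{\<alpha>. P \<alpha> \<noteq> 0}. P \<alpha> * (-1) ^ (\<Sum>i<n. \<alpha> i) *
        (\<Sum>is\<in>TT n (length (mlist n \<alpha>)). aa n A \<alpha> is * \<tau> (cnt is)))"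
    proof -
      have "psi n As (poly_transp n A P) x' = diff_op n (PT n A P) (f_fun n \<sigma>) x'"
        using pe'(1) unfolding poly_transp_eq[OF Pp A] \<sigma>_def v_def .
      also have "\<dots> = (\<Sum>\<beta>\<in>{\<beta>. PT n A P \<beta> \<noteq> 0}. PT n A P \<beta> * ((-1) ^ (\<Sum>i<n. \<beta> i) * \<tau> \<beta>))"
        unfolding DOP[OF \<sigma>c x'c nz'] \<tau>_def by (simp add: mult_ac)
      also have "\<dots> = (\<Sum>\<alpha>\<in>{\<alpha>. P \<alpha> \<noteq> 0}. P \<alpha> *
          (\<Sum>is\<in>TT n (length (mlist n \<alpha>)). aa n A \<alpha> is * ((-1) ^ (\<Sum>i<n. cnt is i) * \<tau> (cnt is))))"
        by (rule REGROUP[OF Pp])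
      also have "\<dots> = (\<Sum>\<alpha>\<in>{\<alpha>. P \<alpha> \<noteq> 0}. P \<alpha> * (-1) ^ (\<Sum>i<n. \<alpha> i) *
        (\<Sum>is\<in>TT n (length (mlist n \<alpha>)). aa n A \<alpha> is * \<tau> (cnt is)))"
      proof (intro sum.cong refl)
        fix \<alpha> :: "nat \<Rightarrow> nat"
        have "(\<Sum>is\<in>TT n (length (mlist n \<alpha>)). aa n A \<alpha> is * ((-1) ^ (\<Sum>i<n. cnt is i) * \<tau> (cnt is)))
          = (\<Sum>is\<in>TT n (length (mlist n \<alpha>)). (-1) ^ (\<Sum>i<n. \<alpha> i) * (aa n A \<alpha> is * \<tau> (cnt is)))"
        proof (intro sum.cong refl)
          fix "is" assume "is \<in> TT n (length (mlist n \<alpha>))"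
          then have "set is \<subseteq> {..<n}" "length is = length (mlist n \<alpha>)" unfolding TT_def by auto
          then have "(\<Sum>i<n. cnt is i) = (\<Sum>i<n. \<alpha> i)"
            unfolding cnt_def using sum_count_set[of "is" "{..<n}"] length_mlist by simp
          then show "aa n A \<alpha> is * ((-1) ^ (\<Sum>i<n. cnt is i) * \<tau> (cnt is))
            = (-1) ^ (\<Sum>i<n. \<alpha> i) * (aa n A \<alpha> is * \<tau> (cnt is))" by (simp add: mult_ac)
        qed
        then show "P \<alpha> * (\<Sum>is\<in>TT n (length (mlist n \<alpha>)). aa n A \<alpha> is * ((-1) ^ (\<Sum>i<n. cnt is i) * \<tau> (cnt is)))
          = P \<alpha> * (-1) ^ (\<Sum>i<n. \<alpha> i) * (\<Sum>is\<in>TT n (length (mlist n \<alpha>)). aa n A \<alpha> is * \<tau> (cnt is))"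
          by (simp add: sum_distrib_left mult_ac)
      qed
      finally show ?thesis .
    qed
    show ?thesis unfolding x'_def[symmetric] LHS RHS ..
  qed
qed

theorem mainTheorem2:
  fixes n :: nat and A :: "complex mat" and B As :: "nat \<Rightarrow> complex mat"
    and P :: coeffs and x :: "complex vec"
  assumes "A \<in> GL n" and "\<forall>k\<le>n. B k \<in> GL n" and "\<forall>k<n. As k \<in> GL n"
    and "P \<in> homog_polys n" and "x \<in> carrier_vec n"
  shows "psi n (\<lambda>k. A * As k) P x
           = det A * psi n As (poly_transp n A P) (transpose_mat A *\<^sub>v x)
       \<and> (\<Sum>i\<le>n. (-1) ^ i * psi n (\<lambda>k. if k < i then B k else B (Suc k)) P x) = 0"
  using part1[OF assms(1,3,4,5)] part2[OF assms(2,5)] by simp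


end
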